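(* Every separable connected almost totally disconnected compact space is metrizable.
   Context: For a set $\Gamma$, $\Sigma_0^1[0,1]^\Gamma$ is the subspace of $[0,1]^\Gamma$ (product topology) consisting of those $x$ with $x_\gamma\in\{0,1\}$ for all but countably many $\gamma$. A compact space is almost totally disconnected if it is homeomorphic to a subspace of $\Sigma_0^1[0,1]^\Gamma$ for some set $\Gamma$. *)

theory Defs
  imports "HOL-Analysis.Analysis"
begin

definition unit_cube_top :: "'g set \<Rightarrow> ('g \<Rightarrow> real) topology" where
  "unit_cube_top \<Gamma> = product_topology (\<lambda>_. top_of_set {0..1::real}) \<Gamma>"

definition Sigma01 :: "'g set \<Rightarrow> ('g \<Rightarrow> real) set" where
  "Sigma01 \<Gamma> = {x \<in> topspace (unit_cube_top \<Gamma>). countable {\<gamma> \<in> \<Gamma>. x \<gamma> \<notin> {0, 1}}}"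

text \<open>X is a compact space homeomorphic to a subspace of Sigma_0^1[0,1]^Gamma (for the given index set Gamma).
  Almost total disconnectedness is the existence of some such Gamma.\<close>
definition almost_totally_disconnected_via :: "'g set \<Rightarrow> 'a topology \<Rightarrow> bool" where
  "almost_totally_disconnected_via \<Gamma> X \<longleftrightarrow>
     compact_space X \<and>
     (\<exists>Y. Y \<subseteq> Sigma01 \<Gamma> \<and> X homeomorphic_space subtopology (unit_cube_top \<Gamma>) Y)"

end

theory Submission
  imports Defs
begin

lemma cube_main:
  fixes Y :: "('g \<Rightarrow> real) set"
  assumes Y: "Y \<subseteq> Sigma01 \<Gamma>"
    and sep: "separable_space (subtopology (unit_cube_top \<Gamma>) Y)"
    and con: "connected_space (subtopology (unit_cube_top \<Gamma>) Y)"
  shows "metrizable_space (subtopology (unit_cube_top \<Gamma>) Y)"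
proof -
  let ?Z = "subtopology (unit_cube_top \<Gamma>) Y"
  have tc: "topspace (unit_cube_top \<Gamma>) = (\<Pi>\<^sub>E i\<in>\<Gamma>. {0..1::real})"
    by (simp add: unit_cube_top_def)
  have Ysub: "Y \<subseteq> topspace (unit_cube_top \<Gamma>)"
    using Y by (auto simp: Sigma01_def)
  have tZ: "topspace ?Z = Y" using Ysub by auto
  obtain D where D: "countable D" "D \<subseteq> Y" "?Z closure_of D = Y"
    using sep tZ unfolding separable_space_def by auto
  define C where "C = (\<Union>d\<in>D. {\<gamma> \<in> \<Gamma>. d \<gamma> \<notin> {0, 1}})"
  have cC: "countable C"
    unfolding C_def using D(1) D(2) Y
    by (intro countable_UN) (auto simp: Sigma01_def)
  have const: "x \<gamma> = y \<gamma>" if g: "\<gamma> \<in> \<Gamma>" "\<gamma> \<notin> C" and xy: "x \<in> Y" "y \<in> Y" for \<gamma> x y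
  proof -
    let ?f = "\<lambda>x::'g\<Rightarrow>real. x \<gamma>"
    have cm1: "continuous_map (unit_cube_top \<Gamma>) (top_of_set {0..1::real}) ?f"
      unfolding unit_cube_top_def using g(1) by (rule continuous_map_product_projection)
    have cm: "continuous_map ?Z euclideanreal ?f"
      using continuous_map_from_subtopology[OF continuous_map_into_fulltopology[OF cm1]] by simp
    have fD: "?f ` D \<subseteq> {0,1}" using g D(2) unfolding C_def by auto
    have "?f ` Y \<subseteq> euclideanreal closure_of (?f ` D)"
      using continuous_map_image_closure_subset[OF cm, of D] D(3) by simp
    also have "\<dots> \<subseteq> euclideanreal closure_of {0,1}"
      by (rule closure_of_mono[OF fD])
    also have "\<dots> = {0,1}"
      by (simp add: closure_of_eq closed_insert)
    finally have sub: "?f ` Y \<subseteq> {0,1}" .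
    have "connectedin ?Z (topspace ?Z)" using con connectedin_topspace by blast
    then have "connectedin euclideanreal (?f ` Y)"
      using connectedin_continuous_map_image[OF cm] tZ by metis
    then have cY: "connected (?f ` Y)" by (simp add: connectedin_iff_connected)
    show ?thesis
    proof (rule ccontr)
      assume ne: "x \<gamma> \<noteq> y \<gamma>"
      have "x \<gamma> \<in> {0,1}" "y \<gamma> \<in> {0,1}" using sub xy by auto
      then have "(x \<gamma> = 0 \<and> y \<gamma> = 1) \<or> (x \<gamma> = 1 \<and> y \<gamma> = 0)" using ne by auto
      then have "1/2 \<in> ?f ` Y"
      proof
        assume "x \<gamma> = 0 \<and> y \<gamma> = 1"
        then show ?thesis using connectedD_interval[OF cY, of "x \<gamma>" "y \<gamma>" "1/2"] xy by auto
      next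
        assume "x \<gamma> = 1 \<and> y \<gamma> = 0"
        then show ?thesis using connectedD_interval[OF cY, of "y \<gamma>" "x \<gamma>" "1/2"] xy by auto
      qed
      then show False using sub by auto
    qed
  qed
  show ?thesis
  proof (cases "Y = {}")
    case True
    then show ?thesis by (simp add: empty_metrizable_space)
  next
    case False
    then obtain c where c: "c \<in> Y" by auto
    define S where "S = (\<lambda>\<gamma>. if \<gamma> \<in> C then {0..1::real} else {c \<gamma>})"
    have YS: "Y \<subseteq> (\<Pi>\<^sub>E i\<in>\<Gamma>. S i)"
    proof
      fix x assume x: "x \<in> Y"
      then have "x \<in> (\<Pi>\<^sub>E i\<in>\<Gamma>. {0..1::real})" using Ysub tc by auto
      then show "x \<in> (\<Pi>\<^sub>E i\<in>\<Gamma>. S i)"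
        using const[OF _ _ x c] by (auto simp: S_def PiE_def Pi_def)
    qed
    have eq: "?Z = subtopology (product_topology (\<lambda>i. subtopology (top_of_set {0..1::real}) (S i)) \<Gamma>) Y"
    proof -
      have "subtopology (product_topology (\<lambda>i. subtopology (top_of_set {0..1::real}) (S i)) \<Gamma>) Y
         = subtopology (subtopology (product_topology (\<lambda>i. top_of_set {0..1::real}) \<Gamma>) (\<Pi>\<^sub>E i\<in>\<Gamma>. S i)) Y"
        by (simp only: subtopology_product_topology)
      also have "\<dots> = subtopology (product_topology (\<lambda>i. top_of_set {0..1::real}) \<Gamma>) Y"
        using YS by (simp only: subtopology_subtopology Int_absorb1)
      finally show ?thesis unfolding unit_cube_top_def by simp
    qed

    have "metrizable_space (product_topology (\<lambda>i. subtopology (top_of_set {0..1::real}) (S i)) \<Gamma>)"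
    proof -
      have "{i \<in> \<Gamma>. \<not> (\<exists>a. topspace (subtopology (top_of_set {0..1::real}) (S i)) \<subseteq> {a})} \<subseteq> C"
        by (auto simp: S_def)
      then have "countable {i \<in> \<Gamma>. \<not> (\<exists>a. topspace (subtopology (top_of_set {0..1::real}) (S i)) \<subseteq> {a})}"
        using cC countable_subset by blast
      then show ?thesis
        unfolding metrizable_space_product_topology
        by (simp add: metrizable_space_subtopology metrizable_space_euclidean)
    qed
    then show ?thesis using eq metrizable_space_subtopology by metis
  qed
qed

theorem mainTheorem5:
  fixes X :: "'a topology" and \<Gamma> :: "'g set"
  assumes "almost_totally_disconnected_via \<Gamma> X"
    and "separable_space X"
    and "connected_space X"
  shows "metrizable_space X"
proof -
  obtain Y where Y: "Y \<subseteq> Sigma01 \<Gamma>" and h: "X homeomorphic_space subtopology (unit_cube_top \<Gamma>) Y"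
    using assms(1) unfolding almost_totally_disconnected_via_def by blast
  show ?thesis
    using cube_main[OF Y] assms(2,3) h
      homeomorphic_separable_space homeomorphic_connected_space homeomorphic_metrizable_space
    by metis
qed

end
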